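(* Let $\mathcal{S}\subseteq 2^{[n]}$ be a Sperner family and $A\subseteq[n]$ a fixed set, and define $h_A:\mathcal{S}\to 2^{[n]}$ by $h_A(S)=S\cap A$. Then $\mathcal{F}=\mathcal{F}(\mathcal{S},h_A)$ is s-extremal and $\mathrm{Sh}(\mathcal{F})=\mathcal{H}(\mathcal{S})$.
   Context: $[n]=\{1,\dots,n\}$. A Sperner family is a family of sets none of which is contained in another. $\mathcal{F}$ shatters $S$ if $\{F\cap S:F\in\mathcal{F}\}=2^S$; $\mathrm{Sh}(\mathcal{F})$ is the family of shattered sets; $\mathcal{F}$ is s-extremal if $|\mathrm{Sh}(\mathcal{F})|=|\mathcal{F}|$. For $H\subseteq S\subseteq[n]$, $\mathcal{Q}_{S,H}=\{H\cup B: B\subseteq[n]\setminus S\}$. $\mathcal{H}(\mathcal{S})=\{F\subseteq[n]: \text{no } S\in\mathcal{S} \text{ satisfies } S\subseteq F\}$, and for $h:\mathcal{S}\to2^{[n]}$ with $h(S)\subseteq S$, $\mathcal{F}(\mathcal{S},h)=2^{[n]}\setminus\bigcup_{S\in\mathcal{S}}\mathcal{Q}_{S,h(S)}$. *)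

theory Defs
  imports Main
begin

definition sperner :: "'a set set \<Rightarrow> bool" where
  "sperner S \<longleftrightarrow> (\<forall>A\<in>S. \<forall>B\<in>S. A \<subseteq> B \<longrightarrow> A = B)"

definition shatters :: "'a set set \<Rightarrow> 'a set \<Rightarrow> bool" where
  "shatters F S \<longleftrightarrow> (\<lambda>X. X \<inter> S) ` F = Pow S"

definition Sh :: "nat \<Rightarrow> nat set set \<Rightarrow> nat set set" where
  "Sh n F = {S. S \<subseteq> {1..n} \<and> shatters F S}"

definition s_extremal :: "nat \<Rightarrow> nat set set \<Rightarrow> bool" where
  "s_extremal n F \<longleftrightarrow> card (Sh n F) = card F"

definition Q :: "nat \<Rightarrow> nat set \<Rightarrow> nat set \<Rightarrow> nat set set" where
  "Q n S H = {H \<union> B | B. B \<subseteq> {1..n} - S}"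

definition HS :: "nat \<Rightarrow> nat set set \<Rightarrow> nat set set" where
  "HS n \<S> = {F. F \<subseteq> {1..n} \<and> \<not> (\<exists>S\<in>\<S>. S \<subseteq> F)}"

definition FS :: "nat \<Rightarrow> nat set set \<Rightarrow> (nat set \<Rightarrow> nat set) \<Rightarrow> nat set set" where
  "FS n \<S> h = Pow {1..n} - (\<Union>S\<in>\<S>. Q n S (h S))"

end

theory Submission
  imports Defs
begin

lemma FS_char:
  assumes "\<S> \<subseteq> Pow {1..n}"
  shows "X \<in> FS n \<S> (\<lambda>S. S \<inter> A) \<longleftrightarrow> X \<subseteq> {1..n} \<and> (\<forall>S\<in>\<S>. X \<inter> S \<noteq> S \<inter> A)"
proof -
  have "X \<in> Q n S (S \<inter> A) \<longleftrightarrow> X \<subseteq> {1..n} \<and> X \<inter> S = S \<inter> A" if "S \<in> \<S>" for S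
  proof
    assume "X \<in> Q n S (S \<inter> A)"
    then obtain B where "B \<subseteq> {1..n} - S" "X = S \<inter> A \<union> B" unfolding Q_def by blast
    then show "X \<subseteq> {1..n} \<and> X \<inter> S = S \<inter> A" using assms that by blast
  next
    assume h: "X \<subseteq> {1..n} \<and> X \<inter> S = S \<inter> A"
    have "X = S \<inter> A \<union> (X - S)" "X - S \<subseteq> {1..n} - S" using h by blast+
    then show "X \<in> Q n S (S \<inter> A)" unfolding Q_def by blast
  qed
  then have qc: "\<forall>S\<in>\<S>. (X \<in> Q n S (S \<inter> A)) = (X \<subseteq> {1..n} \<and> X \<inter> S = S \<inter> A)" by blast
  have "X \<in> FS n \<S> (\<lambda>S. S \<inter> A) \<longleftrightarrow> X \<subseteq> {1..n} \<and> (\<forall>S\<in>\<S>. X \<notin> Q n S (S \<inter> A))"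
    by (simp add: FS_def)
  also have "\<dots> \<longleftrightarrow> X \<subseteq> {1..n} \<and> (\<forall>S\<in>\<S>. X \<inter> S \<noteq> S \<inter> A)"
    using qc by auto
  finally show ?thesis .
qed

theorem proposition14:
  fixes n :: nat and \<S> :: "nat set set" and A :: "nat set"
  assumes "\<S> \<subseteq> Pow {1..n}"
    and "sperner \<S>"
    and "A \<subseteq> {1..n}"
  shows "s_extremal n (FS n \<S> (\<lambda>S. S \<inter> A)) \<and> Sh n (FS n \<S> (\<lambda>S. S \<inter> A)) = HS n \<S>"
proof -
  let ?F = "FS n \<S> (\<lambda>S. S \<inter> A)"
  have Fc: "\<And>X. X \<in> ?F \<longleftrightarrow> X \<subseteq> {1..n} \<and> (\<forall>S\<in>\<S>. X \<inter> S \<noteq> S \<inter> A)"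
    by (rule FS_char[OF assms(1)])
  have sh: "Sh n ?F = HS n \<S>"
  proof (rule set_eqI, rule iffI)
    fix T assume "T \<in> Sh n ?F"
    then have T: "T \<subseteq> {1..n}" "(\<lambda>X. X \<inter> T) ` ?F = Pow T" unfolding Sh_def shatters_def by auto
    show "T \<in> HS n \<S>" unfolding HS_def
    proof (safe intro!: T(1))
      fix S assume S: "S \<in> \<S>" "S \<subseteq> T"
      have "S \<inter> A \<in> Pow T" using S by blast
      then have "S \<inter> A \<in> (\<lambda>X. X \<inter> T) ` ?F" using T(2) by simp
      then obtain X where X2: "S \<inter> A = X \<inter> T" and X: "X \<in> ?F" by (rule imageE)
      have "X \<inter> S = (X \<inter> T) \<inter> S" using S(2) by blast
      also have "\<dots> = S \<inter> A" using X2[symmetric] by blast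
      finally have "X \<inter> S = S \<inter> A" .
      then show False using X S(1) Fc by blast
    qed
  next
    fix T assume "T \<in> HS n \<S>"
    then have T: "T \<subseteq> {1..n}" "\<And>S. S \<in> \<S> \<Longrightarrow> \<not> S \<subseteq> T" unfolding HS_def by auto
    have "(\<lambda>X. X \<inter> T) ` ?F = Pow T"
    proof
      show "(\<lambda>X. X \<inter> T) ` ?F \<subseteq> Pow T" by blast
    next
      show "Pow T \<subseteq> (\<lambda>X. X \<inter> T) ` ?F"
      proof
        fix C assume C: "C \<in> Pow T"
        let ?X = "C \<union> ({1..n} - T - A)"
        have "?X \<in> ?F"
        proof -
          have "?X \<subseteq> {1..n}" using C T(1) by blast
          moreover have "?X \<inter> S \<noteq> S \<inter> A" if S: "S \<in> \<S>" for S
          proof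
            assume eq: "?X \<inter> S = S \<inter> A"
            obtain s where s: "s \<in> S" "s \<notin> T" using T(2)[OF S] by blast
            have "s \<in> {1..n}" using s S assms(1) by blast
            moreover have "s \<in> ?X \<inter> S \<longleftrightarrow> s \<in> S \<inter> A" using eq by simp
            moreover have "s \<notin> C" using C s(2) by blast
            ultimately show False using s by auto
          qed
          ultimately show ?thesis by (simp add: Fc)
        qed
        moreover have "?X \<inter> T = C" using C by blast
        ultimately show "C \<in> (\<lambda>X. X \<inter> T) ` ?F" by (metis image_eqI)
      qed
    qed
    then show "T \<in> Sh n ?F" unfolding Sh_def shatters_def using T(1) by blast
  qed
  define D where "D = {1..n} - A"
  define phi where "phi X = (X - D) \<union> (D - X)" for X
  have key: "X \<inter> S = S \<inter> A \<longleftrightarrow> S \<subseteq> phi X" if "S \<subseteq> {1..n}" for X S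
    using that unfolding phi_def D_def by blast
  have inv: "phi (phi X) = X" for X unfolding phi_def by blast
  have bij: "bij_betw phi ?F (HS n \<S>)"
  proof (rule bij_betw_byWitness[where f' = phi])
    show "\<forall>a\<in>?F. phi (phi a) = a" "\<forall>a\<in>HS n \<S>. phi (phi a) = a" using inv by auto
    show "phi ` ?F \<subseteq> HS n \<S>"
    proof
      fix Y assume "Y \<in> phi ` ?F"
      then obtain X where X: "X \<in> ?F" "Y = phi X" by blast
      have "Y \<subseteq> {1..n}" using X Fc unfolding phi_def D_def by blast
      moreover have "\<not> S \<subseteq> Y" if "S \<in> \<S>" for S
      proof -
        have S1: "S \<subseteq> {1..n}" using that assms(1) by blast
        have "X \<inter> S \<noteq> S \<inter> A" using X(1) that Fc by blast
        then show ?thesis using key[OF S1, of X] X(2) by simp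
      qed
      ultimately show "Y \<in> HS n \<S>" unfolding HS_def by blast
    qed
    show "phi ` HS n \<S> \<subseteq> ?F"
    proof
      fix Y assume "Y \<in> phi ` HS n \<S>"
      then obtain X where X: "X \<in> HS n \<S>" "Y = phi X" by blast
      have "Y \<subseteq> {1..n}" using X unfolding phi_def D_def HS_def by blast
      moreover have "Y \<inter> S \<noteq> S \<inter> A" if "S \<in> \<S>" for S
      proof -
        have S1: "S \<subseteq> {1..n}" using that assms(1) by blast
        have "\<not> S \<subseteq> X" using X(1) that unfolding HS_def by blast
        moreover have "phi Y = X" using X(2) inv by simp
        ultimately show ?thesis using key[OF S1, of Y] by simp
      qed
      ultimately show "Y \<in> ?F" by (simp add: Fc)
    qed
  qed
  have "card ?F = card (HS n \<S>)" using bij_betw_same_card[OF bij] .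
  then show ?thesis using sh unfolding s_extremal_def by simp
qed

end
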